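(* Every graph $G$ that is self-complementary, edge-transitive and vertex-transitive satisfies $\operatorname{tww}(G)=\operatorname{lb}_1(G)$.
   Context: All graphs are finite and simple. A graph is self-complementary if it is isomorphic to its complement, and vertex-transitive (edge-transitive) if its automorphism group acts transitively on its vertices (edges). A trigraph is a graph whose edges are each colored red or black; a graph is viewed as a trigraph with all edges black; the red degree of a vertex is the number of red edges incident to it. For a partition $\mathcal{P}$ of $V(G)$, the quotient trigraph $G/\mathcal{P}$ has vertex set $\mathcal{P}$; two distinct parts $U,W$ are joined by a black edge if every pair $\{u,w\}$ with $u\in U,w\in W$ is a black edge of $G$, are non-adjacent if no such pair is an edge, and are joined by a red edge otherwise. A contraction sequence of an $n$-vertex trigraph $G$ is a sequence $\mathcal{P}_n,\dots,\mathcal{P}_1$ of partitions of $V(G)$ where $\mathcal{P}_n$ is the partition into singletons and each $\mathcal{P}_i$ arises from $\mathcal{P}_{i+1}$ by merging two parts; its width is the maximum red degree over all $G/\mathcal{P}_i$, and $\operatorname{tww}(G)$ is the minimum width of a contraction sequence. For $|V(G)|\geq 2$, $\operatorname{lb}_1(G)$ is the minimum over all 2-element subsets $\{u,v\}\subseteq V(G)$ of the maximum red degree of $G/\mathcal{P}$ where $\mathcal{P}$ has $\{u,v\}$ as its only non-singleton part; $\operatorname{lb}_1(G)=0$ if $|V(G)|=1$. (A graph with $\operatorname{tww}(G)=\operatorname{lb}_1(G)$ is called $\operatorname{lb}_1$-collapsible.) *)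

theory Defs
  imports Main "HOL-Library.Disjoint_Sets"
begin

definition simple_graph :: "'a set \<Rightarrow> 'a set set \<Rightarrow> bool" where
  "simple_graph V E \<longleftrightarrow> finite V \<and> (\<forall>e\<in>E. e \<subseteq> V \<and> card e = 2)"

definition complement_edges :: "'a set \<Rightarrow> 'a set set \<Rightarrow> 'a set set" where
  "complement_edges V E = {e. e \<subseteq> V \<and> card e = 2} - E"

definition graph_iso :: "'a set \<Rightarrow> 'a set set \<Rightarrow> 'b set \<Rightarrow> 'b set set \<Rightarrow> ('a \<Rightarrow> 'b) \<Rightarrow> bool" where
  "graph_iso V E V' E' f \<longleftrightarrow> bij_betw f V V' \<and>
     (\<forall>u\<in>V. \<forall>v\<in>V. {u, v} \<in> E \<longleftrightarrow> {f u, f v} \<in> E')"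

definition self_complementary :: "'a set \<Rightarrow> 'a set set \<Rightarrow> bool" where
  "self_complementary V E \<longleftrightarrow> (\<exists>f. graph_iso V E V (complement_edges V E) f)"

definition automorphism :: "'a set \<Rightarrow> 'a set set \<Rightarrow> ('a \<Rightarrow> 'a) \<Rightarrow> bool" where
  "automorphism V E f \<longleftrightarrow> graph_iso V E V E f"

definition vertex_transitive :: "'a set \<Rightarrow> 'a set set \<Rightarrow> bool" where
  "vertex_transitive V E \<longleftrightarrow> (\<forall>u\<in>V. \<forall>v\<in>V. \<exists>f. automorphism V E f \<and> f u = v)"

definition edge_transitive :: "'a set \<Rightarrow> 'a set set \<Rightarrow> bool" where
  "edge_transitive V E \<longleftrightarrow> (\<forall>e1\<in>E. \<forall>e2\<in>E. \<exists>f. automorphism V E f \<and> f ` e1 = e2)"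

definition red_edge :: "'a set set \<Rightarrow> 'a set \<Rightarrow> 'a set \<Rightarrow> bool" where
  "red_edge E U W \<longleftrightarrow> (\<exists>u\<in>U. \<exists>w\<in>W. {u, w} \<in> E) \<and> (\<exists>u\<in>U. \<exists>w\<in>W. {u, w} \<notin> E)"

definition red_degree :: "'a set set \<Rightarrow> 'a set set \<Rightarrow> 'a set \<Rightarrow> nat" where
  "red_degree E P U = card {W \<in> P. W \<noteq> U \<and> red_edge E U W}"

definition max_red_degree :: "'a set set \<Rightarrow> 'a set set \<Rightarrow> nat" where
  "max_red_degree E P = Max (insert 0 (red_degree E P ` P))"

definition singletons :: "'a set \<Rightarrow> 'a set set" where
  "singletons V = (\<lambda>x. {x}) ` V"

definition merge_step :: "'a set set \<Rightarrow> 'a set set \<Rightarrow> bool" where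
  "merge_step P Q \<longleftrightarrow> (\<exists>U\<in>P. \<exists>W\<in>P. U \<noteq> W \<and> Q = insert (U \<union> W) (P - {U, W}))"

(* A contraction sequence P_n, ..., P_1 is represented by the list
   [P_n, ..., P_1] of length n = |V(G)|. *)
definition contraction_sequence :: "'a set \<Rightarrow> 'a set set list \<Rightarrow> bool" where
  "contraction_sequence V Ps \<longleftrightarrow>
     length Ps = card V \<and>
     (\<forall>i < length Ps. partition_on V (Ps ! i)) \<and>
     (Ps \<noteq> [] \<longrightarrow> Ps ! 0 = singletons V) \<and>
     (\<forall>i. Suc i < length Ps \<longrightarrow> merge_step (Ps ! i) (Ps ! Suc i))"

definition seq_width :: "'a set set \<Rightarrow> 'a set set list \<Rightarrow> nat" where
  "seq_width E Ps = Max (insert 0 (set (map (max_red_degree E) Ps)))"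

definition tww :: "'a set \<Rightarrow> 'a set set \<Rightarrow> nat" where
  "tww V E = Min {seq_width E Ps | Ps. contraction_sequence V Ps}"

definition lb1 :: "'a set \<Rightarrow> 'a set set \<Rightarrow> nat" where
  "lb1 V E = (if card V < 2 then 0 else
     Min {max_red_degree E (insert {u, v} (singletons (V - {u, v}))) | u v. u \<in> V \<and> v \<in> V \<and> u \<noteq> v})"

end

theory Submission
  imports Defs "HOL-Combinatorics.Orbits" "HOL-Combinatorics.Permutations"
begin

locale scg =
  fixes V :: "'a set" and E :: "'a set set"
  assumes sg: "simple_graph V E" and sc: "self_complementary V E"
    and et: "edge_transitive V E" and vt: "vertex_transitive V E"
begin

lemma finV: "finite V" using sg by (simp add: simple_graph_def)

lemma no_loop[simp]: "{x} \<notin> E"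
  using sg by (auto simp: simple_graph_def)

lemma edge_sub: "{x,y} \<in> E \<Longrightarrow> x \<in> V \<and> y \<in> V"
  using sg by (auto simp: simple_graph_def)

definition nb where "nb x = {y\<in>V. {x,y}\<in>E}"
definition mix where "mix u v = {z\<in>V. z\<noteq>u \<and> z\<noteq>v \<and> ({u,z}\<in>E) \<noteq> ({v,z}\<in>E)}"

definition pres :: "('a \<Rightarrow> 'a) \<Rightarrow> bool \<Rightarrow> bool" where
  "pres f b \<longleftrightarrow> bij_betw f V V \<and> (\<forall>u\<in>V. \<forall>v\<in>V. u\<noteq>v \<longrightarrow> ({f u, f v}\<in>E \<longleftrightarrow> ({u,v}\<in>E \<longleftrightarrow> b)))"

lemma aut_pres: "automorphism V E f \<Longrightarrow> pres f True"
  by (simp add: automorphism_def graph_iso_def pres_def)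

lemma sc_pres: assumes "graph_iso V E V (complement_edges V E) f" shows "pres f False"
proof -
  have b: "bij_betw f V V" using assms by (simp add: graph_iso_def)
  have "{f u, f v}\<in>E \<longleftrightarrow> ({u,v}\<in>E \<longleftrightarrow> False)" if "u\<in>V" "v\<in>V" "u\<noteq>v" for u v
  proof -
    have "f u \<noteq> f v" using b that by (metis bij_betw_def inj_onD)
    moreover have "f u \<in> V" "f v \<in> V" using b that by (auto dest: bij_betwE)
    ultimately have "{f u, f v} \<in> complement_edges V E \<longleftrightarrow> {f u, f v} \<notin> E"
      by (auto simp: complement_edges_def card_insert_if)
    then show ?thesis using assms that by (auto simp: graph_iso_def)
  qed
  then show ?thesis using b by (simp add: pres_def)
qed

lemma pres_bij: "pres f b \<Longrightarrow> bij_betw f V V" by (simp add: pres_def)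
lemma pres_in: "pres f b \<Longrightarrow> x \<in> V \<Longrightarrow> f x \<in> V" by (auto simp: pres_def dest: bij_betwE)
lemma pres_inj: "pres f b \<Longrightarrow> x \<in> V \<Longrightarrow> y \<in> V \<Longrightarrow> f x = f y \<longleftrightarrow> x = y"
  by (auto simp: pres_def bij_betw_def dest: inj_onD)
lemma pres_E: "pres f b \<Longrightarrow> u\<in>V \<Longrightarrow> v\<in>V \<Longrightarrow> u\<noteq>v \<Longrightarrow> ({f u, f v}\<in>E \<longleftrightarrow> ({u,v}\<in>E \<longleftrightarrow> b))"
  by (simp add: pres_def)

lemma pres_comp: assumes "pres f a" "pres g b" shows "pres (g \<circ> f) (a = b)"
proof -
  have "bij_betw (g \<circ> f) V V" using assms by (meson bij_betw_trans pres_bij)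
  moreover have "{g (f u), g (f v)}\<in>E \<longleftrightarrow> ({u,v}\<in>E \<longleftrightarrow> (a = b))" if "u\<in>V" "v\<in>V" "u\<noteq>v" for u v
  proof -
    have "f u \<in> V" "f v \<in> V" "f u \<noteq> f v" using assms(1) that pres_in pres_inj by blast+
    then show ?thesis using pres_E[OF assms(2), of "f u" "f v"] pres_E[OF assms(1) that] by blast
  qed
  ultimately show ?thesis by (simp add: pres_def)
qed

lemma pres_id: "pres id True" by (simp add: pres_def)

lemma pres_funpow: assumes "pres f False" shows "pres (f ^^ j) (even j)"
proof (induction j)
  case 0 then show ?case using pres_id by (simp add: id_def)
next
  case (Suc j)
  from pres_comp[OF Suc assms] show ?case by (simp add: comp_def)
qed

lemma nb_sub: "nb x \<subseteq> V" by (auto simp: nb_def)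
lemma nb_not: "x \<notin> nb x" by (auto simp: nb_def)
lemma fin_nb: "finite (nb x)" using finV nb_sub finite_subset by blast

lemma pres_surj: "pres f b \<Longrightarrow> f ` V = V" by (simp add: pres_def bij_betw_def)

lemma pres_nb_T: assumes "pres f True" "x \<in> V" shows "nb (f x) = f ` nb x"
proof
  show "f ` nb x \<subseteq> nb (f x)"
  proof
    fix z assume "z \<in> f ` nb x"
    then obtain y where y: "y \<in> nb x" "z = f y" by auto
    then have "y \<in> V" "y \<noteq> x" "{x,y} \<in> E" using nb_not by (auto simp: nb_def)
    then show "z \<in> nb (f x)" using y pres_E[OF assms(1) assms(2)] pres_in[OF assms(1)] by (auto simp: nb_def)
  qed
next
  show "nb (f x) \<subseteq> f ` nb x"
  proof
    fix z assume z: "z \<in> nb (f x)"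
    then have "z \<in> V" by (auto simp: nb_def)
    then obtain y where y: "y \<in> V" "z = f y" using pres_surj[OF assms(1)] by blast
    have "y \<noteq> x" using z y by (auto simp: nb_def)
    then have "{x,y} \<in> E" using z y pres_E[OF assms(1) assms(2) y(1)] by (auto simp: nb_def)
    then show "z \<in> f ` nb x" using y by (auto simp: nb_def)
  qed
qed

lemma pres_nb_F: assumes "pres f False" "x \<in> V" shows "nb (f x) = f ` (V - {x} - nb x)"
proof
  show "f ` (V - {x} - nb x) \<subseteq> nb (f x)"
  proof
    fix z assume "z \<in> f ` (V - {x} - nb x)"
    then obtain y where y: "y \<in> V" "y \<noteq> x" "y \<notin> nb x" "z = f y" by auto
    then have "{x,y} \<notin> E" by (auto simp: nb_def)
    then show "z \<in> nb (f x)" using y pres_E[OF assms(1) assms(2) y(1)] pres_in[OF assms(1)] by (auto simp: nb_def)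
  qed
next
  show "nb (f x) \<subseteq> f ` (V - {x} - nb x)"
  proof
    fix z assume z: "z \<in> nb (f x)"
    then have "z \<in> V" by (auto simp: nb_def)
    then obtain y where y: "y \<in> V" "z = f y" using pres_surj[OF assms(1)] by blast
    have "y \<noteq> x" using z y by (auto simp: nb_def)
    then have "{x,y} \<notin> E" using z y pres_E[OF assms(1) assms(2) y(1)] by (auto simp: nb_def)
    then show "z \<in> f ` (V - {x} - nb x)" using y \<open>y \<noteq> x\<close> by (auto simp: nb_def)
  qed
qed

lemma pres_card: "pres f b \<Longrightarrow> A \<subseteq> V \<Longrightarrow> card (f ` A) = card A"
  by (meson bij_betw_def card_image inj_on_subset pres_bij)


lemma sigma0: "\<exists>f. pres f False"
  using sc sc_pres by (auto simp: self_complementary_def)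

lemma aut_ex: "u \<in> V \<Longrightarrow> v \<in> V \<Longrightarrow> \<exists>f. pres f True \<and> f u = v"
  using vt aut_pres by (metis vertex_transitive_def)

definition deg where "deg = card (nb (SOME x. x \<in> V))"

lemma deg_const: assumes "x \<in> V" shows "card (nb x) = deg"
proof -
  let ?w = "SOME x. x \<in> V"
  have w: "?w \<in> V" using assms by (meson someI)
  obtain h where h: "pres h True" "h ?w = x" using aut_ex[OF w assms] by blast
  have "nb x = h ` nb ?w" using pres_nb_T[OF h(1) w] h(2) by simp
  then show ?thesis using pres_card[OF h(1) nb_sub] by (simp add: deg_def)
qed

lemma card_non: assumes "x \<in> V" shows "card (V - {x} - nb x) = card V - 1 - deg"
proof -
  have "card (V - {x} - nb x) = card (V - {x}) - card (nb x)"
    by (rule card_Diff_subset) (use fin_nb nb_sub nb_not in auto)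
  then show ?thesis using deg_const[OF assms] assms finV by simp
qed

lemma card_V: assumes "V \<noteq> {}" shows "card V = 2 * deg + 1"
proof -
  obtain x where x: "x \<in> V" using assms by blast
  obtain s where s: "pres s False" using sigma0 by blast
  have "nb (s x) = s ` (V - {x} - nb x)" by (rule pres_nb_F[OF s x])
  then have "card (nb (s x)) = card (V - {x} - nb x)" using pres_card[OF s, of "V - {x} - nb x"] by auto
  then have "deg = card V - 1 - deg" using deg_const pres_in[OF s x] card_non[OF x] by simp
  moreover have "card V \<ge> 1" using x finV by (metis One_nat_def Suc_leI card_gt_0_iff empty_iff)
  ultimately show ?thesis by linarith
qed


lemma mix_sym: "mix u v = mix v u" by (auto simp: mix_def)
lemma mix_sub: "mix u v \<subseteq> V" by (auto simp: mix_def)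
lemma fin_mix: "finite (mix u v)" using finV mix_sub finite_subset by blast

lemma pres_mix: assumes f: "pres f b" and uv: "u \<in> V" "v \<in> V" "u \<noteq> v"
  shows "mix (f u) (f v) = f ` mix u v"
proof
  show "f ` mix u v \<subseteq> mix (f u) (f v)"
  proof
    fix z assume "z \<in> f ` mix u v"
    then obtain y where y: "y \<in> V" "y \<noteq> u" "y \<noteq> v" "({u,y}\<in>E) \<noteq> ({v,y}\<in>E)" "z = f y"
      by (auto simp: mix_def)
    then show "z \<in> mix (f u) (f v)"
      using pres_E[OF f uv(1) y(1)] pres_E[OF f uv(2) y(1)] pres_in[OF f] pres_inj[OF f] uv
      by (auto simp: mix_def)
  qed
next
  show "mix (f u) (f v) \<subseteq> f ` mix u v"
  proof
    fix z assume z: "z \<in> mix (f u) (f v)"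
    then have "z \<in> V" by (auto simp: mix_def)
    then obtain y where y: "y \<in> V" "z = f y" using pres_surj[OF f] by blast
    have "y \<noteq> u" "y \<noteq> v" using z y by (auto simp: mix_def)
    then have "({u,y}\<in>E) \<noteq> ({v,y}\<in>E)"
      using z y pres_E[OF f uv(1) y(1)] pres_E[OF f uv(2) y(1)] by (auto simp: mix_def)
    then show "z \<in> f ` mix u v" using y \<open>y \<noteq> u\<close> \<open>y \<noteq> v\<close> by (auto simp: mix_def)
  qed
qed

lemma pres_mix_card: assumes "pres f b" "u \<in> V" "v \<in> V" "u \<noteq> v"
  shows "card (mix (f u) (f v)) = card (mix u v)"
proof -
  have "mix (f u) (f v) = f ` mix u v" by (rule pres_mix[OF assms])
  then show ?thesis using pres_card[OF assms(1) mix_sub] by simp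
qed

lemma mix_edge: assumes "{u,v} \<in> E" "{a,b} \<in> E" shows "card (mix u v) = card (mix a b)"
proof -
  obtain f where f: "automorphism V E f" "f ` {a,b} = {u,v}"
    using et assms by (meson edge_transitive_def)
  have ab: "a \<in> V" "b \<in> V" "a \<noteq> b" using assms(2) edge_sub by fastforce+
  have fp: "pres f True" using aut_pres f(1) by blast
  have "{f a, f b} = {u,v}" using f(2) by simp
  then have "(f a = u \<and> f b = v) \<or> (f a = v \<and> f b = u)" by (auto simp: doubleton_eq_iff)
  then have "card (mix u v) = card (mix (f a) (f b))" using mix_sym by (elim disjE) auto
  then show ?thesis using pres_mix_card[OF fp ab] by simp
qed

lemma mix_eq: assumes "u \<in> V" "v \<in> V" "u \<noteq> v" "a \<in> V" "b \<in> V" "a \<noteq> b"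
  shows "card (mix u v) = card (mix a b)"
proof -
  obtain s where s: "pres s False" using sigma0 by blast
  have "\<exists>x y. {x,y} \<in> E \<and> card (mix x y) = card (mix u v)" if "u \<in> V" "v \<in> V" "u \<noteq> v" for u v
  proof (cases "{u,v} \<in> E")
    case True then show ?thesis by blast
  next
    case False
    then have "{s u, s v} \<in> E" using pres_E[OF s that] by simp
    then show ?thesis using pres_mix_card[OF s that] by blast
  qed
  note ex = this
  obtain x y where xy: "{x,y} \<in> E" "card (mix x y) = card (mix u v)" using ex[OF assms(1-3)] by blast
  obtain x' y' where xy': "{x',y'} \<in> E" "card (mix x' y') = card (mix a b)" using ex[OF assms(4-6)] by blast
  show ?thesis using mix_edge[OF xy(1) xy'(1)] xy(2) xy'(2) by simp
qed

lemma mix_card: assumes uv: "u \<in> V" "v \<in> V" "u \<noteq> v" shows "card (mix u v) = deg"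
proof -
  let ?m = "card (mix u v)"
  define C where "C z = {y\<in>V. y\<noteq>u \<and> y\<noteq>z \<and> ({u,z}\<in>E) \<noteq> ({y,z}\<in>E)}" for z
  let ?T = "SIGMA y:(V-{u}). mix u y"
  let ?T' = "SIGMA z:(V-{u}). C z"
  have fin: "finite (V - {u})" using finV by simp
  have eqm: "card (mix u y) = ?m" if "y \<in> V - {u}" for y using mix_eq[of u y u v] that uv by auto
  have "card ?T = (\<Sum>y\<in>V-{u}. card (mix u y))" using fin fin_mix by simp
  also have "\<dots> = (\<Sum>y\<in>V-{u}. ?m)"
    by (rule sum.cong) (use eqm in auto)
  also have "\<dots> = (card V - 1) * ?m" using uv finV by simp
  finally have T: "card ?T = (card V - 1) * ?m" .
  have CC: "card (C z) = deg" if z: "z \<in> V - {u}" for z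
  proof (cases "{u,z} \<in> E")
    case True
    have "C z = V - {z} - nb z"
    proof (rule set_eqI)
      fix y
      have "{y,z} = {z,y}" by (rule insert_commute)
      then show "y \<in> C z \<longleftrightarrow> y \<in> V - {z} - nb z" using True by (auto simp: C_def nb_def)
    qed
    moreover have "card V = 2 * deg + 1" using card_V z by blast
    moreover have "z \<in> V" using z by blast
    ultimately show ?thesis using card_non[of z] by simp
  next
    case False
    have "C z = nb z"
    proof (rule set_eqI)
      fix y
      have "{y,z} = {z,y}" by (rule insert_commute)
      then show "y \<in> C z \<longleftrightarrow> y \<in> nb z" using False by (auto simp: C_def nb_def)
    qed
    then show ?thesis using deg_const z by auto
  qed
  have fC: "finite (C z)" for z using finV by (simp add: C_def)
  have "card ?T' = (\<Sum>z\<in>V-{u}. card (C z))" using fin fC by simp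
  also have "\<dots> = (\<Sum>z\<in>V-{u}. deg)" by (rule sum.cong) (use CC in auto)
  also have "\<dots> = (card V - 1) * deg" using uv finV by simp
  finally have T': "card ?T' = (card V - 1) * deg" .
  have "?T' = prod.swap ` ?T"
  proof (rule set_eqI)
    fix p :: "'a \<times> 'a"
    obtain z y where p: "p = (z,y)" by (cases p)
    have "p \<in> prod.swap ` ?T \<longleftrightarrow> (y,z) \<in> ?T" unfolding p
      by (simp add: pair_in_swap_image)
    then show "p \<in> ?T' \<longleftrightarrow> p \<in> prod.swap ` ?T" unfolding p by (auto simp: C_def mix_def)
  qed
  then have "card ?T' = card ?T" by (simp add: card_image)
  then have "(card V - 1) * ?m = (card V - 1) * deg" using T T' by metis
  moreover have "card {u,v} \<le> card V" by (rule card_mono) (use finV uv in auto)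
  then have "card V - 1 > 0" using uv by simp
  ultimately show ?thesis by simp
qed

end

lemma set_combine: assumes "a \<inter> b = {}" "c \<inter> d = {}" "a \<union> b = O1" "c \<union> d = S1" "O1 \<inter> S1 = {}"
  shows "(a \<union> c) \<inter> (b \<union> d) = {}" "(a \<union> c) \<union> (b \<union> d) = O1 \<union> S1" using assms by blast+

lemma pairing:
  fixes s :: "'a \<Rightarrow> 'a"
  assumes sp: "s permutes V" and fV: "finite V" and S0: "S0 \<subseteq> V"
    and d4: "\<forall>x\<in>S0. 4 dvd funpow_dist1 s x x"
  shows "S \<subseteq> S0 \<Longrightarrow> s ` S = S \<Longrightarrow> \<exists>X\<subseteq>S. X \<inter> (s \<circ> s) ` X = {} \<and> X \<union> (s \<circ> s) ` X = S"
proof (induction "card S" arbitrary: S rule: less_induct)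
  case less
  have finS: "finite S" by (rule finite_subset[OF _ fV]) (use less.prems(1) S0 in blast)
  show ?case
  proof (cases "S = {}")
    case True then show ?thesis by (intro exI[of _ "{}"]) simp
  next
    case False
    then obtain x where xS: "x \<in> S" by blast
    have perm: "permutation s" unfolding permutation_permutes using sp fV by blast
    have injs: "inj s" by (rule permutes_inj[OF sp])
    have xo: "x \<in> orbit s x" by (rule permutation_self_in_orbit[OF perm])
    define p where "p = funpow_dist1 s x x"
    have p4: "4 dvd p" unfolding p_def by (rule bspec[OF d4]) (use xS less.prems(1) in blast)
    have pp: "(s ^^ p) x = x" unfolding p_def using funpow_dist1_prop[OF xo] .
    have injp: "inj_on (\<lambda>n. (s ^^ n) x) {0..<p}" unfolding p_def using inj_on_funpow_dist1[OF xo] .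
    define Orb where "Orb = (\<lambda>n. (s ^^ n) x) ` {0..<p}"
    have inS: "(s ^^ n) x \<in> S" for n
      by (induction n) (use xS less.prems(2) in auto)
    have OS: "Orb \<subseteq> S" using inS Orb_def by auto
    have finO: "finite Orb" using Orb_def by simp
    have sO_sub: "s ` Orb \<subseteq> Orb"
    proof
      fix y assume "y \<in> s ` Orb"
      then obtain n where n: "n < p" "y = s ((s ^^ n) x)" by (auto simp: Orb_def)
      show "y \<in> Orb"
      proof (cases "Suc n = p")
        case True
        then have "y = x" using n pp by (metis funpow.simps(2) o_apply)
        moreover have "x \<in> Orb" using n unfolding Orb_def by (metis atLeastLessThan_iff funpow_0 image_eqI le0 not_less0 less_nat_zero_code gr0I)
        ultimately show ?thesis by simp
      next
        case False
        then have "Suc n < p" using n by simp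
        then show ?thesis using n unfolding Orb_def by (auto intro!: image_eqI[where x="Suc n"])
      qed
    qed
    have "card (s ` Orb) = card Orb" using injs by (metis card_image inj_on_subset subset_UNIV)
    then have sO: "s ` Orb = Orb" by (rule card_subset_eq[OF finO sO_sub])
    define S' where "S' = S - Orb"
    have sS': "s ` S' = S'" unfolding S'_def using less.prems(2) sO injs by (simp add: image_set_diff)
    have "0 \<in> {0..<p}" unfolding p_def by simp
    then have "(s ^^ 0) x \<in> Orb" unfolding Orb_def by blast
    then have "x \<in> Orb" by simp
    then have cS': "card S' < card S" unfolding S'_def using finS OS
      by (intro psubset_card_mono) (use \<open>x \<in> Orb\<close> xS in blast)+
    obtain X' where X': "X' \<subseteq> S'" "X' \<inter> (s \<circ> s) ` X' = {}" "X' \<union> (s \<circ> s) ` X' = S'"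
      using less.hyps[OF cS'] less.prems(1) sS' unfolding S'_def by blast
    define A where "A = {n. n < p \<and> n mod 4 < 2}"
    define B where "B = {n. n < p \<and> \<not> n mod 4 < 2}"
    define XO where "XO = (\<lambda>n. (s ^^ n) x) ` A"
    have gXO: "(s \<circ> s) ` XO = (\<lambda>n. (s ^^ n) x) ` B"
    proof
      show "(s \<circ> s) ` XO \<subseteq> (\<lambda>n. (s ^^ n) x) ` B"
      proof
        fix y assume "y \<in> (s \<circ> s) ` XO"
        then obtain n where n: "n \<in> A" "y = s (s ((s ^^ n) x))" by (auto simp: XO_def)
        then have "y = (s ^^ (Suc (Suc n))) x" by simp
        have "n < p \<and> n mod 4 < 2" using n(1) by (simp add: A_def)
        then have "Suc (Suc n) < p \<and> \<not> Suc (Suc n) mod 4 < 2" using p4 by presburger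
        then have "Suc (Suc n) \<in> B" by (simp add: B_def)
        moreover note \<open>y = (s ^^ (Suc (Suc n))) x\<close>
        ultimately show "y \<in> (\<lambda>n. (s ^^ n) x) ` B" by blast
      qed
    next
      show "(\<lambda>n. (s ^^ n) x) ` B \<subseteq> (s \<circ> s) ` XO"
      proof
        fix y assume "y \<in> (\<lambda>n. (s ^^ n) x) ` B"
        then obtain m where m: "m \<in> B" "y = (s ^^ m) x" by auto
        have mB: "m < p \<and> \<not> m mod 4 < 2" using m(1) by (simp add: B_def)
        then have "m \<ge> 2" by presburger
        then obtain n where nm: "m = Suc (Suc n)" by (metis add_2_eq_Suc le_Suc_ex)
        have "n < p \<and> n mod 4 < 2" using mB nm p4 by presburger
        then have "n \<in> A" by (simp add: A_def)
        moreover have "y = (s \<circ> s) ((s ^^ n) x)" using m nm by simp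
        ultimately show "y \<in> (s \<circ> s) ` XO" unfolding XO_def by blast
      qed
    qed
    have AB: "A \<subseteq> {0..<p}" "B \<subseteq> {0..<p}" "A \<inter> B = {}" "A \<union> B = {0..<p}"
      unfolding A_def B_def by auto
    have "XO \<inter> (\<lambda>n. (s ^^ n) x) ` B = {}" unfolding XO_def
      using inj_on_image_Int[OF injp AB(1) AB(2)] AB(3) by simp
    then have dis: "XO \<inter> (s \<circ> s) ` XO = {}" using gXO by simp
    have "XO \<union> (\<lambda>n. (s ^^ n) x) ` B = Orb" unfolding XO_def Orb_def using AB(4) by (simp add: image_Un[symmetric])
    then have un: "XO \<union> (s \<circ> s) ` XO = Orb" using gXO by simp
    define X where "X = XO \<union> X'"
    have gX: "(s \<circ> s) ` X = (s \<circ> s) ` XO \<union> (s \<circ> s) ` X'" unfolding X_def by (simp add: image_Un)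
    have OS': "Orb \<inter> S' = {}" unfolding S'_def by blast
    note sc = set_combine[OF dis X'(2) un X'(3) OS']
    have "X \<inter> ((s \<circ> s) ` XO \<union> (s \<circ> s) ` X') = {}" unfolding X_def by (rule sc(1))
    then have "X \<inter> (s \<circ> s) ` X = {}" using gX by simp
    moreover have "X \<union> ((s \<circ> s) ` XO \<union> (s \<circ> s) ` X') = Orb \<union> S'" unfolding X_def by (rule sc(2))
    then have "X \<union> (s \<circ> s) ` X = S" using gX OS unfolding S'_def by auto
    moreover have "X \<subseteq> S" using calculation(2) by blast
    ultimately show ?thesis by (intro exI[of _ X]) simp
  qed
qed

context scg begin

lemma pres_cong: assumes "pres f b" "\<And>x. x \<in> V \<Longrightarrow> f x = g x" shows "pres g b"
proof -
  have "bij_betw g V V" using pres_bij[OF assms(1)] bij_betw_cong assms(2) by blast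
  moreover have "\<forall>u\<in>V. \<forall>v\<in>V. u\<noteq>v \<longrightarrow> ({g u, g v}\<in>E \<longleftrightarrow> ({u,v}\<in>E \<longleftrightarrow> b))"
    using assms(1) assms(2) by (simp add: pres_def)
  ultimately show ?thesis by (simp add: pres_def)
qed

lemma exists_s: assumes w: "w \<in> V" shows "\<exists>s. pres s False \<and> s permutes V \<and> s w = w"
proof -
  obtain s0 where s0: "pres s0 False" using sigma0 by blast
  obtain h where h: "pres h True" "h (s0 w) = w" using aut_ex[OF pres_in[OF s0 w] w] by blast
  have s1: "pres (h \<circ> s0) False" using pres_comp[OF s0 h(1)] by simp
  define s where "s y = (if y \<in> V then (h \<circ> s0) y else y)" for y
  have sp: "pres s False" by (rule pres_cong[OF s1]) (simp add: s_def)
  have "s permutes V" by (rule bij_imp_permutes[OF pres_bij[OF sp]]) (simp add: s_def)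
  moreover have "s w = w" using w h(2) by (simp add: s_def)
  ultimately show ?thesis using sp by blast
qed

lemma period4:
  assumes sp: "pres s False" and sperm: "s permutes V" and w: "w \<in> V" "s w = w"
    and x: "x \<in> V" "x \<noteq> w"
  shows "4 dvd funpow_dist1 s x x"
proof -
  have perm: "permutation s" unfolding permutation_permutes using sperm finV by blast
  have xo: "x \<in> orbit s x" by (rule permutation_self_in_orbit[OF perm])
  define p where "p = funpow_dist1 s x x"
  have pp: "(s ^^ p) x = x" unfolding p_def by (rule funpow_dist1_prop[OF xo])
  have less: "(s ^^ n) x \<noteq> x" if "0 < n" "n < p" for n
    using funpow_dist1_least[of n s x x] that unfolding p_def by blast
  have p0: "p > 0" unfolding p_def by simp
  have fw: "(s ^^ j) w = w" for j by (induction j) (simp_all add: w(2))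
  have no1: "\<not> odd p"
  proof
    assume "odd p"
    then have "pres (s ^^ p) False" using pres_funpow[OF sp, of p] by simp
    from pres_E[OF this x(1) w(1) x(2)] show False using pp fw[of p] by simp
  qed
  have no2: "\<not> odd (p div 2)"
  proof
    assume o: "odd (p div 2)"
    define q where "q = p div 2"
    have pq: "p = q + q" using no1 unfolding q_def by presburger
    have q0: "0 < q" "q < p" using o p0 pq unfolding q_def by presburger+
    define y where "y = (s ^^ q) x"
    have yx: "y \<noteq> x" unfolding y_def by (rule less[OF q0])
    have yy: "(s ^^ q) y = x" unfolding y_def using pp pq by (simp add: funpow_add)
    have pq': "pres (s ^^ q) False" using pres_funpow[OF sp, of q] o unfolding q_def by simp
    have yV: "y \<in> V" unfolding y_def by (rule pres_in[OF pq' x(1)])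
    from pres_E[OF pq' x(1) yV yx[symmetric]] have "{y, x} \<in> E \<longleftrightarrow> {x, y} \<notin> E"
      using yy by (simp add: y_def)
    moreover have "{y, x} = {x, y}" by (rule insert_commute)
    ultimately show False by simp
  qed
  have "4 dvd p" using no1 no2 by presburger
  then show ?thesis unfolding p_def .
qed

lemma exists_X: assumes w: "w \<in> V"
  shows "\<exists>g X. pres g True \<and> X \<subseteq> V - {w} \<and> X \<inter> g ` X = {} \<and> X \<union> g ` X = V - {w}"
proof -
  obtain s where s: "pres s False" "s permutes V" "s w = w" using exists_s[OF w] by blast
  have d4: "\<forall>x\<in>V - {w}. 4 dvd funpow_dist1 s x x" using period4[OF s(1) s(2) w s(3)] by blast
  have inj: "inj s" by (rule permutes_inj[OF s(2)])
  have "s ` (V - {w}) = s ` V - s ` {w}" using inj by (simp add: image_set_diff)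
  then have sV: "s ` (V - {w}) = V - {w}" using permutes_image[OF s(2)] s(3) by simp
  obtain X where X: "X \<subseteq> V - {w}" "X \<inter> (s \<circ> s) ` X = {}" "X \<union> (s \<circ> s) ` X = V - {w}"
    using pairing[OF s(2) finV _ d4 _ sV] by blast
  have "pres (s \<circ> s) True" using pres_comp[OF s(1) s(1)] by simp
  then show ?thesis using X by blast
qed

end

lemma merge_partition:
  assumes P: "partition_on V P" and U: "U \<in> P" and W: "W \<in> P" and UW: "U \<noteq> W"
  shows "partition_on V (insert (U \<union> W) (P - {U, W}))"
proof -
  have un: "\<Union>P = V" and dis: "disjoint P" and ne: "{} \<notin> P" using P by (auto simp: partition_on_def)
  have "\<Union>(insert (U \<union> W) (P - {U, W})) = V" using un U W by blast
  moreover have "disjoint (insert (U \<union> W) (P - {U, W}))"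
  proof (rule pairwiseI)
    fix A B assume A: "A \<in> insert (U \<union> W) (P - {U, W})" and B: "B \<in> insert (U \<union> W) (P - {U, W})" and AB: "A \<noteq> B"
    have d: "disjnt X Y" if "X \<in> P" "Y \<in> P" "X \<noteq> Y" for X Y using dis that by (meson pairwiseD)
    show "disjnt A B"
    proof (cases "A = U \<union> W")
      case True
      then have "B \<in> P - {U,W}" using B AB by blast
      then show ?thesis using True d[OF U, of B] d[OF W, of B] by (auto simp: disjnt_def)
    next
      case False
      then have A': "A \<in> P - {U,W}" using A by blast
      show ?thesis
      proof (cases "B = U \<union> W")
        case True
        then show ?thesis using A' d[OF U, of A] d[OF W, of A] by (auto simp: disjnt_def)
      next
        case False
        then have "B \<in> P" using B by blast
        then show ?thesis using A' AB d by blast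
      qed
    qed
  qed
  moreover have "{} \<notin> insert (U \<union> W) (P - {U, W})" using ne U by auto
  ultimately show ?thesis by (simp add: partition_on_def)
qed

lemma merge_card:
  assumes P: "partition_on V P" "finite P" and U: "U \<in> P" and W: "W \<in> P" and UW: "U \<noteq> W"
  shows "card (insert (U \<union> W) (P - {U, W})) = card P - 1"
proof -
  have dis: "disjoint P" and ne: "{} \<notin> P" using P by (auto simp: partition_on_def)
  have "U \<union> W \<notin> P - {U, W}"
  proof
    assume Z: "U \<union> W \<in> P - {U, W}"
    then have "disjnt U (U \<union> W)" using dis U by (metis DiffD1 DiffD2 insertCI pairwiseD)
    moreover have "U \<noteq> {}" using ne U by blast
    ultimately show False by (auto simp: disjnt_def)
  qed
  then have "card (insert (U \<union> W) (P - {U, W})) = Suc (card (P - {U, W}))"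
    using P(2) by simp
  moreover have "card (P - {U, W}) = card P - 2" using P(2) U W UW by (simp add: card_Diff_subset)
  moreover have "card P \<ge> 2"
  proof -
    have "card {U, W} \<le> card P" by (rule card_mono) (use P(2) U W in auto)
    then show ?thesis using UW by simp
  qed
  ultimately show ?thesis by simp
qed

lemma red_degree_le_card: "finite P \<Longrightarrow> U \<in> P \<Longrightarrow> red_degree E P U \<le> card P - 1"
proof -
  assume f: "finite P" and U: "U \<in> P"
  have "red_degree E P U \<le> card (P - {U})" unfolding red_degree_def
    by (rule card_mono) (use f in auto)
  then show ?thesis using U f by simp
qed

lemma max_red_le: "finite P \<Longrightarrow> (\<And>U. U \<in> P \<Longrightarrow> red_degree E P U \<le> k) \<Longrightarrow> max_red_degree E P \<le> k"
  unfolding max_red_degree_def by (simp add: Max_le_iff)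

lemma card_hit:
  assumes P: "partition_on V P" and M: "finite M"
  shows "card {W\<in>P. W \<inter> M \<noteq> {}} \<le> card M"
proof -
  define f where "f W = (SOME z. z \<in> W \<inter> M)" for W
  have fin: "f W \<in> W \<inter> M" if "W \<inter> M \<noteq> {}" for W unfolding f_def using that by (meson ex_in_conv someI)
  have dis: "disjoint P" using P by (auto simp: partition_on_def)
  have "inj_on f {W\<in>P. W \<inter> M \<noteq> {}}"
  proof (rule inj_onI)
    fix A B assume A: "A \<in> {W\<in>P. W \<inter> M \<noteq> {}}" and B: "B \<in> {W\<in>P. W \<inter> M \<noteq> {}}" and e: "f A = f B"
    have "A \<inter> M \<noteq> {}" "B \<inter> M \<noteq> {}" "A \<in> P" "B \<in> P" using A B by auto
    then have "f A \<in> A" "f B \<in> B" using fin by auto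
    then have "f A \<in> A \<inter> B" using e by simp
    then have "\<not> disjnt A B" by (auto simp: disjnt_def)
    then show "A = B" using dis \<open>A \<in> P\<close> \<open>B \<in> P\<close> by (meson pairwiseD)
  qed
  moreover have "f ` {W\<in>P. W \<inter> M \<noteq> {}} \<subseteq> M" using fin by auto
  ultimately show ?thesis using card_inj_on_le M by blast
qed

lemma seq_exists:
  fixes ok :: "'a set set \<Rightarrow> bool"
  assumes fV: "finite V" and Vne: "V \<noteq> {}"
    and okp: "\<And>P. ok P \<Longrightarrow> partition_on V P \<and> max_red_degree E P \<le> k"
    and step: "\<And>P. ok P \<Longrightarrow> 2 \<le> card P \<Longrightarrow> \<exists>Q. ok Q \<and> merge_step P Q"
  shows "ok P \<Longrightarrow> \<exists>Qs. length Qs = card P \<and> Qs ! 0 = P \<and>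
     (\<forall>i<length Qs. partition_on V (Qs ! i) \<and> max_red_degree E (Qs ! i) \<le> k) \<and>
     (\<forall>i. Suc i < length Qs \<longrightarrow> merge_step (Qs ! i) (Qs ! Suc i))"
proof (induction "card P" arbitrary: P rule: less_induct)
  case less
  have Pp: "partition_on V P" and Pk: "max_red_degree E P \<le> k" using okp[OF less.prems] by auto
  have fP: "finite P" using finite_elements[OF fV Pp] .
  have "P \<noteq> {}" using Pp Vne by (auto simp: partition_on_def)
  then have c1: "card P \<ge> 1" using fP by (simp add: Suc_leI card_gt_0_iff)
  show ?case
  proof (cases "card P = 1")
    case True
    then show ?thesis using Pp Pk by (intro exI[of _ "[P]"]) simp
  next
    case False
    then have c2: "2 \<le> card P" using c1 by simp
    obtain Q where Q: "ok Q" "merge_step P Q" using step[OF less.prems c2] by blast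
    obtain U W where UW: "U \<in> P" "W \<in> P" "U \<noteq> W" "Q = insert (U \<union> W) (P - {U, W})"
      using Q(2) unfolding merge_step_def by blast
    have cQ: "card Q = card P - 1" using merge_card[OF Pp fP UW(1-3)] UW(4) by simp
    then have "card Q < card P" using c2 by simp
    then obtain Qs where Qs: "length Qs = card Q" "Qs ! 0 = Q"
      "\<forall>i<length Qs. partition_on V (Qs ! i) \<and> max_red_degree E (Qs ! i) \<le> k"
      "\<forall>i. Suc i < length Qs \<longrightarrow> merge_step (Qs ! i) (Qs ! Suc i)"
      using less.hyps[OF _ Q(1)] by blast
    have "length (P # Qs) = card P" using Qs(1) cQ c2 by simp
    moreover have "\<forall>i<length (P # Qs). partition_on V ((P # Qs) ! i) \<and> max_red_degree E ((P # Qs) ! i) \<le> k"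
    proof (intro allI impI)
      fix i assume "i < length (P # Qs)"
      then show "partition_on V ((P # Qs) ! i) \<and> max_red_degree E ((P # Qs) ! i) \<le> k"
        using Qs(3) Pp Pk by (cases i) auto
    qed
    moreover have "\<forall>i. Suc i < length (P # Qs) \<longrightarrow> merge_step ((P # Qs) ! i) ((P # Qs) ! Suc i)"
    proof (intro allI impI)
      fix i assume "Suc i < length (P # Qs)"
      then show "merge_step ((P # Qs) ! i) ((P # Qs) ! Suc i)"
        using Qs(2) Qs(4) Q(2) by (cases i) auto
    qed
    ultimately show ?thesis by (intro exI[of _ "P # Qs"]) simp
  qed
qed

locale seqc = scg V E for V :: "'a set" and E +
  fixes g X w
  assumes gp: "pres g True" and wV: "w \<in> V" and Xsub: "X \<subseteq> V - {w}"
    and Xdis: "X \<inter> g ` X = {}" and Xun: "X \<union> g ` X = V - {w}"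
begin

lemma Xfacts: assumes "y \<in> X" shows "y \<in> V" "g y \<in> V" "g y \<notin> X" "g y \<noteq> y" "y \<noteq> w" "g y \<noteq> w"
proof -
  have a: "g y \<in> g ` X" using assms by (rule imageI)
  then have b: "g y \<in> V - {w}" using Xun by blast
  have c: "g y \<notin> X" using a Xdis by blast
  show "y \<in> V" "y \<noteq> w" using assms Xsub by auto
  show "g y \<in> V" "g y \<noteq> w" "g y \<notin> X" using b c by auto
  show "g y \<noteq> y" using c assms by auto
qed

lemma ginj: "a \<in> V \<Longrightarrow> b \<in> V \<Longrightarrow> g a = g b \<longleftrightarrow> a = b" using pres_inj[OF gp] by blast

lemma finX: "finite X" using Xsub finV finite_subset by blast

lemma cardX: "card X = deg"
proof -
  have "card (X \<union> g ` X) = card X + card (g ` X)" using finX Xdis by (simp add: card_Un_disjoint)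
  moreover have "card (g ` X) = card X" using pres_card[OF gp] Xsub by blast
  moreover have "V \<noteq> {}" using wV by blast
  then have "card (V - {w}) = 2 * deg" using card_V wV finV by simp
  ultimately show ?thesis using Xun by simp
qed

definition pp :: "'a set \<Rightarrow> 'a set set" where
  "pp Y = (\<lambda>y. {y, g y}) ` Y \<union> (\<lambda>z. {z}) ` (V - (Y \<union> g ` Y))"

lemma pp_empty: "pp {} = singletons V" by (simp add: pp_def singletons_def)

lemma pp_fin: "Y \<subseteq> X \<Longrightarrow> finite (pp Y)"
  using finX finV finite_subset unfolding pp_def by blast

lemma red_pp: assumes Y: "Y \<subseteq> X" and Pp: "partition_on V (pp Y)" and U: "U \<in> pp Y"
  shows "red_degree E (pp Y) U \<le> deg"
proof -
  have finY: "finite Y" using Y finX finite_subset by blast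
  have finP: "finite (pp Y)" using pp_fin[OF Y] .
  from U consider (pair) y where "y \<in> Y" "U = {y, g y}" | (single) z where "z \<in> V - (Y \<union> g ` Y)" "U = {z}"
    by (auto simp: pp_def)
  then show ?thesis
  proof cases
    case single
    have "{W \<in> pp Y. W \<noteq> U \<and> red_edge E U W} \<subseteq> (\<lambda>y. {y, g y}) ` Y"
    proof
      fix W assume W: "W \<in> {W \<in> pp Y. W \<noteq> U \<and> red_edge E U W}"
      show "W \<in> (\<lambda>y. {y, g y}) ` Y"
      proof (rule ccontr)
        assume "W \<notin> (\<lambda>y. {y, g y}) ` Y"
        then obtain z' where "W = {z'}" using W by (auto simp: pp_def)
        then show False using W single(2) by (auto simp: red_edge_def)
      qed
    qed
    then have "red_degree E (pp Y) U \<le> card ((\<lambda>y. {y, g y}) ` Y)" unfolding red_degree_def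
      by (rule card_mono[rotated]) (use finY in simp)
    also have "\<dots> \<le> card Y" by (rule card_image_le[OF finY])
    also have "\<dots> \<le> card X" by (rule card_mono[OF finX Y])
    finally show ?thesis using cardX by simp
  next
    case pair
    have yX: "y \<in> X" using pair Y by auto
    note yf = Xfacts[OF yX]
    have sub: "{W \<in> pp Y. W \<noteq> U \<and> red_edge E U W} \<subseteq> {W \<in> pp Y. W \<inter> mix y (g y) \<noteq> {}}"
    proof
      fix W assume W: "W \<in> {W \<in> pp Y. W \<noteq> U \<and> red_edge E U W}"
      then have WP: "W \<in> pp Y" and WU: "W \<noteq> U" and R: "red_edge E U W" by auto
      from WP consider (p2) a where "a \<in> Y" "W = {a, g a}" | (s2) z where "z \<in> V - (Y \<union> g ` Y)" "W = {z}"
        by (auto simp: pp_def)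
      then have "W \<inter> mix y (g y) \<noteq> {}"
      proof cases
        case s2
        have zz: "z \<noteq> y" "z \<noteq> g y" "z \<in> V" using s2 pair by auto
        moreover have "({y,z}\<in>E) \<noteq> ({g y, z}\<in>E)" using R s2 pair by (auto simp: red_edge_def)
        ultimately have "z \<in> mix y (g y)" by (auto simp: mix_def)
        then show ?thesis using s2 by auto
      next
        case p2
        have aX: "a \<in> X" using p2 Y by auto
        note af = Xfacts[OF aX]
        have ay: "a \<noteq> y" using WU p2 pair by auto
        have ne: "a \<noteq> g y" "g a \<noteq> y" "g a \<noteq> g y" using aX yX af yf ay ginj by metis+
        show ?thesis
        proof (rule ccontr)
          assume "\<not> W \<inter> mix y (g y) \<noteq> {}"
          then have "a \<notin> mix y (g y)" "g a \<notin> mix y (g y)" using p2 by auto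
          then have e1: "({y,a}\<in>E) = ({g y,a}\<in>E)" and e2: "({y, g a}\<in>E) = ({g y, g a}\<in>E)"
            using ne ay af by (auto simp: mix_def)
          have e3: "({g y, g a}\<in>E) = ({y,a}\<in>E)" using pres_E[OF gp yf(1) af(1) ay[symmetric]] by simp
          show False using R e1 e2 e3 p2 pair by (auto simp: red_edge_def)
        qed
      qed
      then show "W \<in> {W \<in> pp Y. W \<inter> mix y (g y) \<noteq> {}}" using WP by simp
    qed
    have "red_degree E (pp Y) U \<le> card {W \<in> pp Y. W \<inter> mix y (g y) \<noteq> {}}" unfolding red_degree_def
      by (rule card_mono[OF _ sub]) (use finP in simp)
    also have "\<dots> \<le> card (mix y (g y))" by (rule card_hit[OF Pp fin_mix])
    also have "\<dots> = deg" by (rule mix_card) (use yf in auto)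
    finally show ?thesis .
  qed
qed

lemma pp_merge: assumes Y: "Y \<subseteq> X" and x: "x \<in> X" "x \<notin> Y"
  shows "{x} \<in> pp Y" "{g x} \<in> pp Y" "{x} \<noteq> {g x}"
    "pp (insert x Y) = insert ({x} \<union> {g x}) (pp Y - {{x}, {g x}})"
proof -
  note xf = Xfacts[OF x(1)]
  have x1: "x \<notin> g ` Y" using x(1) Y Xdis by blast
  have x2: "g x \<notin> Y" using xf Y by blast
  have x3: "g x \<notin> g ` Y"
  proof
    assume "g x \<in> g ` Y"
    then obtain y where "y \<in> Y" "g x = g y" by blast
    then show False using ginj[of x y] xf Xfacts[of y] Y x(2) by blast
  qed
  have gy: "\<And>y. y \<in> Y \<Longrightarrow> g y \<noteq> y" using Xfacts Y by blast
  show "{x} \<in> pp Y" using x1 x(2) xf by (auto simp: pp_def)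
  show "{g x} \<in> pp Y" using x2 x3 xf by (auto simp: pp_def)
  show "{x} \<noteq> {g x}" using xf by auto
  show "pp (insert x Y) = insert ({x} \<union> {g x}) (pp Y - {{x}, {g x}})"
  proof (rule set_eqI)
    fix U
    show "U \<in> pp (insert x Y) \<longleftrightarrow> U \<in> insert ({x} \<union> {g x}) (pp Y - {{x}, {g x}})"
      using x1 x2 x3 xf gy x(2) by (auto simp: pp_def doubleton_eq_iff)
  qed
qed

lemma pp_X_card: "card (pp X) \<le> deg + 1"
proof -
  have "V - (X \<union> g ` X) = {w}" using Xun wV by auto
  then have "pp X = (\<lambda>y. {y, g y}) ` X \<union> {{w}}" by (simp add: pp_def)
  then have "card (pp X) \<le> card ((\<lambda>y. {y, g y}) ` X) + card {{w}}" using finX by (simp add: card_insert_if)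
  also have "\<dots> \<le> card X + 1" using card_image_le[OF finX] by simp
  finally show ?thesis using cardX by simp
qed

definition ok :: "'a set set \<Rightarrow> bool" where
  "ok P \<longleftrightarrow> partition_on V P \<and> (card P \<le> deg + 1 \<or> (\<exists>Y\<subseteq>X. P = pp Y))"

lemma ok_props: assumes "ok P" shows "partition_on V P \<and> max_red_degree E P \<le> deg"
proof -
  have Pp: "partition_on V P" using assms by (simp add: ok_def)
  have fP: "finite P" using finite_elements[OF finV Pp] .
  have "max_red_degree E P \<le> deg"
  proof (cases "card P \<le> deg + 1")
    case True
    show ?thesis
    proof (rule max_red_le[OF fP])
      fix U assume "U \<in> P"
      then show "red_degree E P U \<le> deg" using red_degree_le_card[OF fP, of U E] True by simp
    qed
  next
    case False
    then obtain Y where Y: "Y \<subseteq> X" "P = pp Y" using assms by (auto simp: ok_def)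
    show ?thesis
    proof (rule max_red_le[OF fP])
      fix U assume "U \<in> P"
      then show "red_degree E P U \<le> deg" using red_pp[OF Y(1)] Pp Y(2) by simp
    qed
  qed
  then show ?thesis using Pp by simp
qed

lemma ok_step: assumes P: "ok P" and c2: "2 \<le> card P" shows "\<exists>Q. ok Q \<and> merge_step P Q"
proof -
  have Pp: "partition_on V P" using P by (simp add: ok_def)
  have fP: "finite P" using finite_elements[OF finV Pp] .
  show ?thesis
  proof (cases "\<exists>Y\<subseteq>X. P = pp Y \<and> Y \<noteq> X")
    case True
    then obtain Y where Y: "Y \<subseteq> X" "P = pp Y" "Y \<noteq> X" by auto
    then obtain x where x: "x \<in> X" "x \<notin> Y" by auto
    note m = pp_merge[OF Y(1) x]
    have ms: "merge_step P (pp (insert x Y))" unfolding merge_step_def Y(2)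
      using m by (intro bexI[of _ "{x}"] bexI[of _ "{g x}"] conjI) auto
    have pa: "partition_on V (pp (insert x Y))" unfolding m(4)
      by (rule merge_partition) (use Pp Y(2) m in auto)
    have "insert x Y \<subseteq> X" using Y x by auto
    then have "ok (pp (insert x Y))" unfolding ok_def using pa
      by (intro conjI disjI2 exI[of _ "insert x Y"]) auto
    then show ?thesis using ms by (intro exI[of _ "pp (insert x Y)"]) simp
  next
    case False
    have cP: "card P \<le> deg + 1"
    proof (cases "card P \<le> deg + 1")
      case False
      then obtain Y where "Y \<subseteq> X" "P = pp Y" using P by (auto simp: ok_def)
      then have "P = pp X" using \<open>\<not> (\<exists>Y\<subseteq>X. P = pp Y \<and> Y \<noteq> X)\<close> by auto
      then show ?thesis using pp_X_card by simp
    qed simp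
    have "P \<noteq> {}" using c2 by auto
    then obtain U where U: "U \<in> P" by auto
    have "card (P - {U}) \<ge> 1" using c2 U fP by simp
    then have "P - {U} \<noteq> {}" by (metis card.empty not_one_le_zero)
    then obtain W where W: "W \<in> P - {U}" by auto
    define Q where "Q = insert (U \<union> W) (P - {U, W})"
    have UW: "U \<noteq> W" "W \<in> P" using W by auto
    have ms: "merge_step P Q" unfolding merge_step_def Q_def using U UW
      by (intro bexI[of _ U] bexI[of _ W] conjI) auto
    have pa: "partition_on V Q" unfolding Q_def by (rule merge_partition[OF Pp U UW(2) UW(1)])
    have "card Q \<le> deg + 1" unfolding Q_def using merge_card[OF Pp fP U UW(2) UW(1)] cP by simp
    then have "ok Q" unfolding ok_def using pa by simp
    then show ?thesis using ms by (intro exI[of _ Q]) simp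
  qed
qed

lemma good_seq: "\<exists>Qs. contraction_sequence V Qs \<and> seq_width E Qs \<le> deg"
proof -
  have Vne: "V \<noteq> {}" using wV by blast
  have ok0: "ok (singletons V)" unfolding ok_def
    using pp_empty partition_on_singletons[of V] by (auto simp: singletons_def)
  obtain Qs where Qs: "length Qs = card (singletons V)" "Qs ! 0 = singletons V"
     "\<forall>i<length Qs. partition_on V (Qs ! i) \<and> max_red_degree E (Qs ! i) \<le> deg"
     "\<forall>i. Suc i < length Qs \<longrightarrow> merge_step (Qs ! i) (Qs ! Suc i)"
    using seq_exists[OF finV Vne ok_props ok_step ok0] by blast
  have "card (singletons V) = card V" unfolding singletons_def by (simp add: card_image)
  then have "contraction_sequence V Qs" using Qs unfolding contraction_sequence_def by simp
  moreover have "seq_width E Qs \<le> deg" unfolding seq_width_def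
    using Qs(3) by (auto simp: in_set_conv_nth)
  ultimately show ?thesis by blast
qed

end

context scg begin

lemma tww_set_finite: "finite {seq_width E Ps | Ps. contraction_sequence V Ps}"
proof -
  have "{Ps. contraction_sequence V Ps} \<subseteq> {xs. set xs \<subseteq> {P. partition_on V P} \<and> length xs = card V}"
    by (auto simp: contraction_sequence_def in_set_conv_nth)
  moreover have "finite {xs. set xs \<subseteq> {P. partition_on V P} \<and> length xs = card V}"
    by (rule finite_lists_length_eq[OF finitely_many_partition_on[OF finV]])
  ultimately have "finite {Ps. contraction_sequence V Ps}" by (rule finite_subset)
  then have "finite (seq_width E ` {Ps. contraction_sequence V Ps})" by simp
  moreover have "{seq_width E Ps | Ps. contraction_sequence V Ps} = seq_width E ` {Ps. contraction_sequence V Ps}"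
    by auto
  ultimately show ?thesis by simp
qed

lemma red_lower: assumes uv: "u \<in> V" "v \<in> V" "u \<noteq> v"
  shows "deg \<le> max_red_degree E (insert {u,v} (singletons (V - {u,v})))"
proof -
  define P1 where "P1 = insert {u,v} (singletons (V - {u,v}))"
  have fP: "finite P1" unfolding P1_def singletons_def using finV by simp
  have sub: "(\<lambda>z. {z}) ` mix u v \<subseteq> {W\<in>P1. W \<noteq> {u,v} \<and> red_edge E {u,v} W}"
  proof
    fix W assume "W \<in> (\<lambda>z. {z}) ` mix u v"
    then obtain z where z: "z \<in> V" "z \<noteq> u" "z \<noteq> v" "({u,z}\<in>E) \<noteq> ({v,z}\<in>E)" "W = {z}"
      by (auto simp: mix_def)
    have "W \<in> P1" using z unfolding P1_def singletons_def by auto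
    moreover have "W \<noteq> {u,v}" using z uv by auto
    moreover have "red_edge E {u,v} W" using z unfolding red_edge_def by auto
    ultimately show "W \<in> {W\<in>P1. W \<noteq> {u,v} \<and> red_edge E {u,v} W}" by simp
  qed
  have "deg = card (mix u v)" using mix_card[OF uv] by simp
  also have "\<dots> = card ((\<lambda>z. {z}) ` mix u v)" by (simp add: card_image)
  also have "\<dots> \<le> red_degree E P1 {u,v}" unfolding red_degree_def
    by (rule card_mono[OF _ sub]) (use fP in simp)
  also have "\<dots> \<le> max_red_degree E P1" unfolding max_red_degree_def
    by (rule Max_ge) (use fP P1_def in auto)
  finally show ?thesis unfolding P1_def .
qed

definition Lset where "Lset = {max_red_degree E (insert {u, v} (singletons (V - {u, v}))) | u v. u \<in> V \<and> v \<in> V \<and> u \<noteq> v}"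

lemma Lset_finite: "finite Lset"
proof -
  have "Lset \<subseteq> (\<lambda>(u,v). max_red_degree E (insert {u, v} (singletons (V - {u, v})))) ` (V \<times> V)"
    unfolding Lset_def by auto
  then show ?thesis using finV finite_subset by blast
qed

lemma lb1_eq: "2 \<le> card V \<Longrightarrow> lb1 V E = Min Lset"
  unfolding lb1_def Lset_def by simp

lemma two_elems: assumes "2 \<le> card V" shows "\<exists>u v. u \<in> V \<and> v \<in> V \<and> u \<noteq> v"
proof -
  have "V \<noteq> {}" using assms by auto
  then obtain u where u: "u \<in> V" by auto
  have "card (V - {u}) \<ge> 1" using assms u finV by simp
  then have "V - {u} \<noteq> {}" by (metis card.empty not_one_le_zero)
  then obtain v where "v \<in> V - {u}" by auto
  then show ?thesis using u by blast
qed

lemma Lset_ne: "2 \<le> card V \<Longrightarrow> Lset \<noteq> {}"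
  using two_elems unfolding Lset_def by blast

lemma lb1_ge: assumes "2 \<le> card V" shows "deg \<le> lb1 V E"
proof -
  have "\<forall>a\<in>Lset. deg \<le> a" unfolding Lset_def using red_lower by blast
  then show ?thesis using lb1_eq[OF assms] Lset_finite Lset_ne[OF assms] by simp
qed

lemma lb1_le_tww: assumes c2: "2 \<le> card V" and ex: "contraction_sequence V Ps0"
  shows "lb1 V E \<le> tww V E"
proof -
  let ?S = "{seq_width E Ps | Ps. contraction_sequence V Ps}"
  have "?S \<noteq> {}" using ex by blast
  then have "tww V E \<in> ?S" unfolding tww_def using tww_set_finite by (rule Min_in[rotated])
  then obtain Ps where Ps: "contraction_sequence V Ps" "tww V E = seq_width E Ps" by auto
  have len: "length Ps = card V" using Ps(1) by (simp add: contraction_sequence_def)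
  then have "Ps \<noteq> []" using c2 by auto
  then have P0: "Ps ! 0 = singletons V" using Ps(1) by (simp add: contraction_sequence_def)
  have "merge_step (Ps ! 0) (Ps ! 1)" using Ps(1) len c2 by (simp add: contraction_sequence_def)
  then obtain U W where UW: "U \<in> singletons V" "W \<in> singletons V" "U \<noteq> W"
      "Ps ! 1 = insert (U \<union> W) (singletons V - {U, W})"
    unfolding merge_step_def P0 by blast
  then obtain a b where ab: "a \<in> V" "b \<in> V" "U = {a}" "W = {b}" by (auto simp: singletons_def)
  have "a \<noteq> b" using ab UW(3) by auto
  have "singletons V - {U, W} = singletons (V - {a, b})" using ab by (auto simp: singletons_def)
  then have P1: "Ps ! 1 = insert {a, b} (singletons (V - {a, b}))" using UW(4) ab by auto
  have "max_red_degree E (Ps ! 1) \<in> Lset" unfolding P1 Lset_def using ab \<open>a \<noteq> b\<close> by blast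
  then have "lb1 V E \<le> max_red_degree E (Ps ! 1)" using lb1_eq[OF c2] Lset_finite by simp
  also have "\<dots> \<le> seq_width E Ps" unfolding seq_width_def
  proof (rule Max_ge)
    show "finite (insert 0 (set (map (max_red_degree E) Ps)))" by simp
    have "1 < length Ps" using len c2 by simp
    then show "max_red_degree E (Ps ! 1) \<in> insert 0 (set (map (max_red_degree E) Ps))"
      using nth_mem[of 1 Ps] by auto
  qed
  finally show ?thesis using Ps(2) by simp
qed

theorem main: "tww V E = lb1 V E"
proof (cases "V = {}")
  case True
  have "{seq_width E Ps | Ps. contraction_sequence V Ps} = {0}"
    using True by (auto simp: contraction_sequence_def seq_width_def)
  then have "tww V E = 0" by (simp add: tww_def)
  moreover have "lb1 V E = 0" using True by (simp add: lb1_def)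
  ultimately show ?thesis by simp
next
  case False
  then obtain w where w: "w \<in> V" by blast
  obtain g X where gX: "pres g True" "X \<subseteq> V - {w}" "X \<inter> g ` X = {}" "X \<union> g ` X = V - {w}"
    using exists_X[OF w] by blast
  have sq: "seqc V E g X w"
    by (intro seqc.intro scg_axioms seqc_axioms.intro gX w)
  obtain Qs where Qs: "contraction_sequence V Qs" "seq_width E Qs \<le> deg"
    using seqc.good_seq[OF sq] by blast
  have "tww V E \<le> seq_width E Qs" unfolding tww_def
    by (rule Min_le[OF tww_set_finite]) (use Qs(1) in blast)
  then have tle: "tww V E \<le> deg" using Qs(2) by simp
  show ?thesis
  proof (cases "2 \<le> card V")
    case True
    show ?thesis using tle lb1_ge[OF True] lb1_le_tww[OF True Qs(1)] by simp
  next
    case False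
    then have "deg = 0" using card_V[OF \<open>V \<noteq> {}\<close>] by simp
    then show ?thesis using tle False by (simp add: lb1_def)
  qed
qed

end

theorem mainTheorem8:
  fixes V :: "'a set" and E :: "'a set set"
  assumes "simple_graph V E"
    and "self_complementary V E"
    and "edge_transitive V E"
    and "vertex_transitive V E"
  shows "tww V E = lb1 V E"
proof -
  interpret scg V E using assms by (rule scg.intro)
  show ?thesis by (rule main)
qed

end
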